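(* Let $(S,\ast)$ and $(T,\ast')$ be adequate commutative partial semigroups, let $h:S\to T$ be a surjective partial semigroup homomorphism, and let $\tilde h:\beta S\to\beta T$ be the continuous extension of $h$. Suppose $\tilde h$ maps $\delta S$ onto $\delta T$. Then (a) $\tilde h(K(\delta S))=K(\delta T)$; (b) if $A$ is a central set in $S$, then $h(A)$ is a central set in $T$; (c) if $A$ is a central set in $T$, then $h^{-1}(A)$ is a central set in $S$.
   Context: A partial semigroup is a pair $(S,\ast)$ where $\ast$ is an operation defined on a subset of $S\times S$ such that $(x\ast y)\ast z=x\ast(y\ast z)$ in the sense that if either side is defined, so is the other and they are equal; commutative means $x\ast y=y\ast x$ whenever defined. $\phi_S(s)=\{t: s\ast t\text{ defined}\}$, $\sigma_S(H)=\bigcap_{s\in H}\phi_S(s)$ for finite nonempty $H$; $S$ is adequate if all $\sigma_S(H)\ne\emptyset$. A map $h:S\to T$ is a partial semigroup homomorphism if whenever $y\in\phi_S(x)$, $h(y)\in\phi_T(h(x))$ and $h(x\ast y)=h(x)\ast' h(y)$. $\beta S$ is the Stone–Čech compactification of discrete $S$ (ultrafilters on $S$); $\tilde h(p)=\{B\subseteq T: h^{-1}(B)\in p\}$. $\delta S=\bigcap_{x\in S}\overline{\phi_S(x)}$, where $\overline{A}=\{p\in\beta S: A\in p\}$, with operation $p\ast q=\{A\subseteq S:\{s: s^{-1}A\in q\}\in p\}$, $s^{-1}A=\{t\in\phi_S(s): s\ast t\in A\}$; $\delta S$ is a compact right topological semigroup with smallest two-sided ideal $K(\delta S)$ (similarly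 for $T$). $A\subseteq S$ is central if there is an idempotent $p\in K(\delta S)\cap\overline{A}$. *)

theory Defs
  imports Main
begin

text \<open>A partial operation on the type 'a (the whole type is the underlying set S):
  op x y = None means x * y is undefined.\<close>

definition partial_semigroup :: "('a \<Rightarrow> 'a \<Rightarrow> 'a option) \<Rightarrow> bool" where
  "partial_semigroup op \<longleftrightarrow>
     (\<forall>x y z. Option.bind (op x y) (\<lambda>u. op u z) = Option.bind (op y z) (\<lambda>v. op x v))"

definition pcommutative :: "('a \<Rightarrow> 'a \<Rightarrow> 'a option) \<Rightarrow> bool" where
  "pcommutative op \<longleftrightarrow> (\<forall>x y. op x y = op y x)"

definition phi :: "('a \<Rightarrow> 'a \<Rightarrow> 'a option) \<Rightarrow> 'a \<Rightarrow> 'a set" where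
  "phi op s = {t. op s t \<noteq> None}"

definition sigma :: "('a \<Rightarrow> 'a \<Rightarrow> 'a option) \<Rightarrow> 'a set \<Rightarrow> 'a set" where
  "sigma op H = (\<Inter>s\<in>H. phi op s)"

definition adequate :: "('a \<Rightarrow> 'a \<Rightarrow> 'a option) \<Rightarrow> bool" where
  "adequate op \<longleftrightarrow> (\<forall>H. finite H \<and> H \<noteq> {} \<longrightarrow> sigma op H \<noteq> {})"

definition ps_hom :: "('a \<Rightarrow> 'a \<Rightarrow> 'a option) \<Rightarrow> ('b \<Rightarrow> 'b \<Rightarrow> 'b option) \<Rightarrow> ('a \<Rightarrow> 'b) \<Rightarrow> bool" where
  "ps_hom opS opT h \<longleftrightarrow>
     (\<forall>x y. y \<in> phi opS x \<longrightarrow> h y \<in> phi opT (h x) \<and> opT (h x) (h y) = map_option h (opS x y))"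

definition is_ultrafilter :: "'a set set \<Rightarrow> bool" where
  "is_ultrafilter p \<longleftrightarrow> UNIV \<in> p \<and> {} \<notin> p \<and>
     (\<forall>A B. A \<in> p \<and> A \<subseteq> B \<longrightarrow> B \<in> p) \<and>
     (\<forall>A B. A \<in> p \<and> B \<in> p \<longrightarrow> A \<inter> B \<in> p) \<and>
     (\<forall>A. A \<in> p \<or> - A \<in> p)"

definition betaS :: "'a set set set" where
  "betaS = {p. is_ultrafilter p}"

definition bclosure :: "'a set \<Rightarrow> 'a set set set" where
  "bclosure A = {p \<in> betaS. A \<in> p}"

definition deltaS :: "('a \<Rightarrow> 'a \<Rightarrow> 'a option) \<Rightarrow> 'a set set set" where
  "deltaS op = (\<Inter>x. bclosure (phi op x))"

definition ext :: "('a \<Rightarrow> 'b) \<Rightarrow> 'a set set \<Rightarrow> 'b set set" where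
  "ext h p = {B. h -` B \<in> p}"

definition sinv :: "('a \<Rightarrow> 'a \<Rightarrow> 'a option) \<Rightarrow> 'a \<Rightarrow> 'a set \<Rightarrow> 'a set" where
  "sinv op s A = {t \<in> phi op s. the (op s t) \<in> A}"

definition ustar :: "('a \<Rightarrow> 'a \<Rightarrow> 'a option) \<Rightarrow> 'a set set \<Rightarrow> 'a set set \<Rightarrow> 'a set set" where
  "ustar op p q = {A. {s. sinv op s A \<in> q} \<in> p}"

definition sg_ideal :: "'c set \<Rightarrow> ('c \<Rightarrow> 'c \<Rightarrow> 'c) \<Rightarrow> 'c set \<Rightarrow> bool" where
  "sg_ideal D m I \<longleftrightarrow> I \<noteq> {} \<and> I \<subseteq> D \<and> (\<forall>x\<in>I. \<forall>y\<in>D. m x y \<in> I \<and> m y x \<in> I)"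

definition Kmin :: "'c set \<Rightarrow> ('c \<Rightarrow> 'c \<Rightarrow> 'c) \<Rightarrow> 'c set" where
  "Kmin D m = \<Inter>{I. sg_ideal D m I}"

definition KdeltaS :: "('a \<Rightarrow> 'a \<Rightarrow> 'a option) \<Rightarrow> 'a set set set" where
  "KdeltaS op = Kmin (deltaS op) (ustar op)"

definition central :: "('a \<Rightarrow> 'a \<Rightarrow> 'a option) \<Rightarrow> 'a set \<Rightarrow> bool" where
  "central op A \<longleftrightarrow> (\<exists>p \<in> KdeltaS op \<inter> bclosure A. ustar op p p = p)"

end

theory Submission
  imports Defs
begin

section \<open>Ultrafilter basics\<close>

lemma uf_UNIV: "is_ultrafilter p \<Longrightarrow> UNIV \<in> p" by (simp add: is_ultrafilter_def)
lemma uf_empty: "is_ultrafilter p \<Longrightarrow> {} \<notin> p" by (simp add: is_ultrafilter_def)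
lemma uf_mono: "is_ultrafilter p \<Longrightarrow> A \<in> p \<Longrightarrow> A \<subseteq> B \<Longrightarrow> B \<in> p"
  unfolding is_ultrafilter_def by blast
lemma uf_Int: "is_ultrafilter p \<Longrightarrow> A \<in> p \<Longrightarrow> B \<in> p \<Longrightarrow> A \<inter> B \<in> p"
  unfolding is_ultrafilter_def by blast
lemma uf_Int_iff: "is_ultrafilter p \<Longrightarrow> (A \<inter> B \<in> p) = (A \<in> p \<and> B \<in> p)"
  by (meson inf_le1 inf_le2 uf_Int uf_mono)
lemma uf_compl: "is_ultrafilter p \<Longrightarrow> (- A \<in> p) = (A \<notin> p)"
proof
  assume p: "is_ultrafilter p" and a: "- A \<in> p"
  show "A \<notin> p"
  proof
    assume "A \<in> p"
    then have "A \<inter> - A \<in> p" using uf_Int[OF p] a by blast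
    then show False using uf_empty[OF p] by simp
  qed
next
  assume "is_ultrafilter p" "A \<notin> p" then show "- A \<in> p" unfolding is_ultrafilter_def by blast
qed
lemma uf_eq: "is_ultrafilter p \<Longrightarrow> is_ultrafilter q \<Longrightarrow> p \<subseteq> q \<Longrightarrow> p = q"
proof
  assume p: "is_ultrafilter p" and q: "is_ultrafilter q" and s: "p \<subseteq> q"
  show "q \<subseteq> p"
  proof
    fix A assume "A \<in> q"
    then have "- A \<notin> q" using uf_compl[OF q] by simp
    then have "- A \<notin> p" using s by blast
    then show "A \<in> p" using uf_compl[OF p] by simp
  qed
qed
lemma uf_cut: "is_ultrafilter p \<Longrightarrow> C \<in> p \<Longrightarrow> (A \<in> p) = (A \<inter> C \<in> p)"
  using uf_Int_iff by blast

definition fip :: "'a set set \<Rightarrow> bool" where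
  "fip F \<longleftrightarrow> (\<forall>H. finite H \<and> H \<subseteq> F \<longrightarrow> \<Inter>H \<noteq> {})"

lemma min_Zorn:
  fixes AA :: "'x set set"
  assumes "AA \<noteq> {}"
    and ch: "\<And>C. C \<noteq> {} \<Longrightarrow> C \<subseteq> AA \<Longrightarrow> (\<forall>X\<in>C. \<forall>Y\<in>C. X \<subseteq> Y \<or> Y \<subseteq> X) \<Longrightarrow> \<Inter>C \<in> AA"
  shows "\<exists>M\<in>AA. \<forall>X\<in>AA. X \<subseteq> M \<longrightarrow> X = M"
proof -
  have "\<exists>M\<in>uminus ` AA. \<forall>X\<in>uminus ` AA. M \<subseteq> X \<longrightarrow> X = M"
  proof (rule subset_Zorn_nonempty)
    show "uminus ` AA \<noteq> {}" using assms(1) by simp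
  next
    fix C assume C: "C \<noteq> {}" "subset.chain (uminus ` AA) C"
    let ?D = "uminus ` C"
    have C1: "C \<subseteq> uminus ` AA" and C2: "\<forall>X\<in>C. \<forall>Y\<in>C. X \<subseteq> Y \<or> Y \<subseteq> X"
      using C(2) unfolding subset_chain_def by auto
    have D1: "?D \<noteq> {}" using C(1) by simp
    have D2: "?D \<subseteq> AA"
    proof
      fix X assume "X \<in> ?D"
      then obtain Y where "Y \<in> C" "X = - Y" by auto
      with C1 obtain Z where "Z \<in> AA" "Y = - Z" by auto
      then show "X \<in> AA" using \<open>X = - Y\<close> by simp
    qed
    have D3: "\<forall>X\<in>?D. \<forall>Y\<in>?D. X \<subseteq> Y \<or> Y \<subseteq> X"
    proof (intro ballI)
      fix X Y assume "X \<in> ?D" "Y \<in> ?D"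
      then obtain X' Y' where "X' \<in> C" "Y' \<in> C" "X = - X'" "Y = - Y'" by auto
      then show "X \<subseteq> Y \<or> Y \<subseteq> X" using C2 by auto
    qed
    have "\<Inter>?D \<in> AA" using ch[OF D1 D2 D3] .
    moreover have "\<Union>C = - \<Inter>?D" by auto
    ultimately show "\<Union>C \<in> uminus ` AA" by (metis image_eqI)
  qed
  then obtain M where M: "M \<in> AA" "\<forall>X\<in>AA. - M \<subseteq> - X \<longrightarrow> - X = - M" by auto
  show ?thesis
  proof (intro bexI[OF _ M(1)] ballI impI)
    fix X assume "X \<in> AA" "X \<subseteq> M"
    then have "- X = - M" using M(2) by auto
    then show "X = M" by simp
  qed
qed

lemma fipD: "fip G \<Longrightarrow> finite H \<Longrightarrow> H \<subseteq> G \<Longrightarrow> \<Inter>H \<noteq> {}"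
  unfolding fip_def by simp

lemma fipaux1: "A \<subseteq> B \<Longrightarrow> \<Inter>(insert A (H - {B})) \<subseteq> \<Inter>H" by blast
lemma fipaux2: "\<Inter>(insert A (insert B (H - {A \<inter> B}))) \<subseteq> \<Inter>H" by blast
lemma fipaux3: "finite H \<Longrightarrow> H \<subseteq> insert B G \<Longrightarrow> A \<in> G \<Longrightarrow> finite (insert A (H - {B})) \<and> insert A (H - {B}) \<subseteq> G" by auto
lemma fipaux3b: "finite H \<Longrightarrow> H \<subseteq> insert C G \<Longrightarrow> A \<in> G \<Longrightarrow> B \<in> G \<Longrightarrow> finite (insert A (insert B (H - {C}))) \<and> insert A (insert B (H - {C})) \<subseteq> G" by auto
lemma fipaux4: "x \<in> \<Inter>((H1 - {A}) \<union> (H2 - {-A})) \<Longrightarrow> x \<in> A \<Longrightarrow> x \<in> \<Inter>H1" by blast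
lemma fipaux5: "x \<in> \<Inter>((H1 - {A}) \<union> (H2 - {-A})) \<Longrightarrow> x \<notin> A \<Longrightarrow> x \<in> \<Inter>H2" by blast
lemma fipaux6: "finite H1 \<Longrightarrow> H1 \<subseteq> insert A G \<Longrightarrow> finite H2 \<Longrightarrow> H2 \<subseteq> insert (-A) G \<Longrightarrow> finite ((H1 - {A}) \<union> (H2 - {-A})) \<and> (H1 - {A}) \<union> (H2 - {-A}) \<subseteq> G" by auto

lemma ultrafilter_exists:
  fixes F :: "'a set set"
  assumes "fip F"
  shows "\<exists>p. is_ultrafilter p \<and> F \<subseteq> p"
proof -
  let ?AA = "{G. F \<subseteq> G \<and> fip G}"
  have "\<exists>M\<in>?AA. \<forall>X\<in>?AA. M \<subseteq> X \<longrightarrow> X = M"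
  proof (rule subset_Zorn_nonempty)
    show "?AA \<noteq> {}" using assms by auto
  next
    fix C assume C: "C \<noteq> {}" "subset.chain ?AA C"
    have "fip (\<Union>C)" unfolding fip_def
    proof (intro allI impI)
      fix H assume H: "finite H \<and> H \<subseteq> \<Union>C"
      then obtain G where "G \<in> C" "H \<subseteq> G"
        using finite_subset_Union_chain[of H C ?AA] C by blast
      moreover have "fip G" using \<open>G \<in> C\<close> C(2) unfolding subset_chain_def by blast
      ultimately show "\<Inter>H \<noteq> {}" using H unfolding fip_def by blast
    qed
    moreover have "F \<subseteq> \<Union>C"
    proof -
      obtain G where "G \<in> C" using C(1) by blast
      then have "F \<subseteq> G" using C(2) unfolding subset_chain_def by blast
      then show ?thesis using \<open>G \<in> C\<close> by blast
    qed
    ultimately show "\<Union>C \<in> ?AA" by simp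
  qed
  then obtain G where G0: "G \<in> ?AA" and mx0: "\<forall>X\<in>?AA. G \<subseteq> X \<longrightarrow> X = G" by (rule bexE)
  have G: "F \<subseteq> G" "fip G" using G0 by simp_all
  have mx: "X = G" if "F \<subseteq> X" "fip X" "G \<subseteq> X" for X
    using mx0 that by simp
  have add: "B \<in> G" if "A \<in> G" "A \<subseteq> B" for A B
  proof -
    have "fip (insert B G)" unfolding fip_def
    proof (intro allI impI)
      fix H assume H: "finite H \<and> H \<subseteq> insert B G"
      let ?H = "insert A (H - {B})"
      have "finite ?H \<and> ?H \<subseteq> G" using fipaux3[of H B G A] H that(1) by blast
      then have "\<Inter>?H \<noteq> {}" by (metis fipD[OF G(2)])
      moreover have "\<Inter>?H \<subseteq> \<Inter>H" using fipaux1[OF that(2)] .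
      ultimately show "\<Inter>H \<noteq> {}" by (metis subset_empty)
    qed
    moreover have "F \<subseteq> insert B G" "G \<subseteq> insert B G" using G by blast+
    ultimately have "insert B G = G" by (intro mx)
    then show ?thesis by blast
  qed
  have int: "A \<inter> B \<in> G" if "A \<in> G" "B \<in> G" for A B
  proof -
    have "fip (insert (A \<inter> B) G)" unfolding fip_def
    proof (intro allI impI)
      fix H assume H: "finite H \<and> H \<subseteq> insert (A \<inter> B) G"
      let ?H = "insert A (insert B (H - {A \<inter> B}))"
      have "finite ?H \<and> ?H \<subseteq> G" using fipaux3b[of H "A \<inter> B" G A B] H that by blast
      then have "\<Inter>?H \<noteq> {}" by (metis fipD[OF G(2)])
      moreover have "\<Inter>?H \<subseteq> \<Inter>H" using fipaux2 .
      ultimately show "\<Inter>H \<noteq> {}" by (metis subset_empty)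
    qed
    moreover have "F \<subseteq> insert (A \<inter> B) G" "G \<subseteq> insert (A \<inter> B) G" using G by blast+
    ultimately have "insert (A \<inter> B) G = G" by (intro mx)
    then show ?thesis by blast
  qed
  have cmp: "A \<in> G \<or> - A \<in> G" for A
  proof (rule ccontr)
    assume n: "\<not> (A \<in> G \<or> - A \<in> G)"
    have "\<not> fip (insert A G)"
    proof
      assume "fip (insert A G)"
      moreover have "F \<subseteq> insert A G" "G \<subseteq> insert A G" using G by blast+
      ultimately have "insert A G = G" by (intro mx)
      then show False using n by blast
    qed
    then obtain H1 where H1: "finite H1" "H1 \<subseteq> insert A G" "\<Inter>H1 = {}" unfolding fip_def by blast
    have "\<not> fip (insert (- A) G)"
    proof
      assume "fip (insert (- A) G)"
      moreover have "F \<subseteq> insert (- A) G" "G \<subseteq> insert (- A) G" using G by blast+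
      ultimately have "insert (- A) G = G" by (intro mx)
      then show False using n by blast
    qed
    then obtain H2 where H2: "finite H2" "H2 \<subseteq> insert (-A) G" "\<Inter>H2 = {}" unfolding fip_def by blast
    let ?H = "(H1 - {A}) \<union> (H2 - {-A})"
    have "finite ?H \<and> ?H \<subseteq> G" using fipaux6[OF H1(1,2) H2(1,2)] .
    then have "\<Inter>?H \<noteq> {}" by (metis fipD[OF G(2)])
    then obtain x where x: "x \<in> \<Inter>?H" by auto
    show False
    proof (cases "x \<in> A")
      case True
      then have "x \<in> \<Inter>H1" using fipaux4[OF x] by blast
      then show False using H1(3) by blast
    next
      case False
      then have "x \<in> \<Inter>H2" using fipaux5[OF x] by blast
      then show False using H2(3) by blast
    qed
  qed
  have e: "{} \<notin> G"
  proof
    assume "{} \<in> G"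
    then have "finite {{}} \<and> {{}} \<subseteq> G" by simp
    then have "\<Inter>{{}} \<noteq> {}" using G(2) unfolding fip_def by blast
    then show False by simp
  qed
  have u: "UNIV \<in> G"
  proof -
    have "- {} \<in> G" using cmp[of "{}"] e by blast
    then show ?thesis by simp
  qed
  have "is_ultrafilter G" unfolding is_ultrafilter_def
  proof (intro conjI allI impI)
    show "UNIV \<in> G" by (rule u)
    show "{} \<notin> G" by (rule e)
  next
    fix A B assume "A \<in> G \<and> A \<subseteq> B" then show "B \<in> G" using add by blast
  next
    fix A B assume "A \<in> G \<and> B \<in> G" then show "A \<inter> B \<in> G" using int by blast
  next
    fix A show "A \<in> G \<or> - A \<in> G" by (rule cmp)
  qed
  then show ?thesis using G by blast
qed

lemma ps_assoc:
  assumes "partial_semigroup op" "op u v = Some w"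
  shows "op w t = Option.bind (op v t) (op u)"
proof -
  have "Option.bind (op u v) (\<lambda>x. op x t) = Option.bind (op v t) (\<lambda>y. op u y)"
    using assms(1) unfolding partial_semigroup_def by blast
  then show ?thesis using assms(2) by simp
qed

lemma sinv_mono: "A \<subseteq> B \<Longrightarrow> sinv op s A \<subseteq> sinv op s B"
  unfolding sinv_def by auto
lemma sinv_Int: "sinv op s (A \<inter> B) = sinv op s A \<inter> sinv op s B"
  unfolding sinv_def by auto
lemma sinv_compl: "sinv op s (- A) = phi op s \<inter> - sinv op s A"
  unfolding sinv_def by auto
lemma sinv_UNIV: "sinv op s UNIV = phi op s"
  unfolding sinv_def by auto
lemma sinv_empty: "sinv op s {} = {}"
  unfolding sinv_def by auto

lemma sinv_sinv:
  assumes ps: "partial_semigroup op" and v: "v \<in> phi op u"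
  shows "sinv op v (sinv op u A) = sinv op (the (op u v)) A"
proof -
  obtain w where w: "op u v = Some w" using v unfolding phi_def by auto
  have "t \<in> sinv op v (sinv op u A) \<longleftrightarrow> t \<in> sinv op w A" for t
  proof (cases "op v t")
    case None
    then show ?thesis using ps_assoc[OF ps w, of t] unfolding sinv_def phi_def by simp
  next
    case (Some z)
    then show ?thesis using ps_assoc[OF ps w, of t] unfolding sinv_def phi_def by simp
  qed
  then show ?thesis using w by auto
qed

lemma deltaS_iff: "p \<in> deltaS op \<longleftrightarrow> p \<in> betaS \<and> (\<forall>x. phi op x \<in> p)"
  unfolding deltaS_def bclosure_def by auto

lemma betaS_iff: "p \<in> betaS \<longleftrightarrow> is_ultrafilter p"
  unfolding betaS_def by simp

lemma deltaS_uf: "p \<in> deltaS op \<Longrightarrow> is_ultrafilter p"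
  by (simp add: deltaS_iff betaS_iff)

lemma ustar_mem: "A \<in> ustar op p q \<longleftrightarrow> {s. sinv op s A \<in> q} \<in> p"
  unfolding ustar_def by simp

lemma ustar_ultra:
  assumes p: "p \<in> betaS" and q: "q \<in> deltaS op"
  shows "ustar op p q \<in> betaS"
proof -
  have P: "is_ultrafilter p" using p by (simp add: betaS_iff)
  have Q: "is_ultrafilter q" using q by (rule deltaS_uf)
  have ph: "phi op s \<in> q" for s using q by (simp add: deltaS_iff)
  define QQ where "QQ A = {s. sinv op s A \<in> q}" for A
  have m: "A \<in> ustar op p q \<longleftrightarrow> QQ A \<in> p" for A unfolding QQ_def ustar_mem ..
  have q1: "QQ UNIV = UNIV" unfolding QQ_def sinv_UNIV using ph by auto
  have q2: "QQ {} = {}" unfolding QQ_def sinv_empty using uf_empty[OF Q] by auto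
  have q3: "QQ A \<subseteq> QQ B" if AB: "A \<subseteq> B" for A B
  proof
    fix s assume "s \<in> QQ A"
    then have "sinv op s A \<in> q" unfolding QQ_def by simp
    then have "sinv op s B \<in> q" by (rule uf_mono[OF Q _ sinv_mono[OF AB]])
    then show "s \<in> QQ B" unfolding QQ_def by simp
  qed
  have q4: "QQ (A \<inter> B) = QQ A \<inter> QQ B" for A B
    unfolding QQ_def sinv_Int by (simp add: uf_Int_iff[OF Q] Collect_conj_eq)
  have q5: "QQ (- A) = - QQ A" for A
    unfolding QQ_def by (simp add: sinv_compl uf_Int_iff[OF Q] ph uf_compl[OF Q] Collect_neg_eq)
  have "is_ultrafilter (ustar op p q)" unfolding is_ultrafilter_def m
  proof (intro conjI allI impI)
    show "QQ UNIV \<in> p" using q1 uf_UNIV[OF P] by simp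
    show "QQ {} \<notin> p" using q2 uf_empty[OF P] by simp
  next
    fix A B assume "QQ A \<in> p \<and> A \<subseteq> B" then show "QQ B \<in> p" by (meson q3 uf_mono[OF P])
  next
    fix A B assume "QQ A \<in> p \<and> QQ B \<in> p" then show "QQ (A \<inter> B) \<in> p" using q4 uf_Int[OF P] by simp
  next
    fix A show "QQ A \<in> p \<or> QQ (- A) \<in> p" using q5 uf_compl[OF P] by simp
  qed
  then show ?thesis by (simp add: betaS_iff)
qed

lemma ustar_delta:
  assumes ps: "partial_semigroup op" and p: "p \<in> deltaS op" and q: "q \<in> deltaS op"
  shows "ustar op p q \<in> deltaS op"
proof -
  have P: "is_ultrafilter p" using p by (rule deltaS_uf)
  have Q: "is_ultrafilter q" using q by (rule deltaS_uf)
  have "phi op x \<in> ustar op p q" for x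
  proof -
    have sub: "phi op x \<subseteq> {s. sinv op s (phi op x) \<in> q}"
    proof
      fix s assume s: "s \<in> phi op x"
      then obtain w where w: "op x s = Some w" unfolding phi_def by auto
      have "phi op s \<inter> phi op w \<subseteq> sinv op s (phi op x)"
      proof
        fix t assume t: "t \<in> phi op s \<inter> phi op w"
        then obtain z where z: "op s t = Some z" unfolding phi_def by auto
        have "op w t = op x z" using ps_assoc[OF ps w, of t] z by simp
        then show "t \<in> sinv op s (phi op x)" using t z unfolding sinv_def phi_def by auto
      qed
      moreover have "phi op s \<inter> phi op w \<in> q" using q uf_Int[OF Q] by (simp add: deltaS_iff)
      ultimately show "s \<in> {s. sinv op s (phi op x) \<in> q}" using uf_mono[OF Q] by blast
    qed
    have "phi op x \<in> p" using p by (simp add: deltaS_iff)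
    then show ?thesis using sub uf_mono[OF P] by (simp add: ustar_mem)
  qed
  moreover have "p \<in> betaS" using p by (simp add: deltaS_iff)
  then have "ustar op p q \<in> betaS" using ustar_ultra q by blast
  ultimately show ?thesis by (simp add: deltaS_iff)
qed

lemma ustar_assoc:
  assumes ps: "partial_semigroup op" and p: "p \<in> deltaS op" and q: "q \<in> deltaS op"
    and r: "r \<in> deltaS op"
  shows "ustar op (ustar op p q) r = ustar op p (ustar op q r)"
proof -
  have Q: "is_ultrafilter q" using q by (rule deltaS_uf)
  have key: "sinv op u {s. sinv op s A \<in> r} \<in> q \<longleftrightarrow> {v. sinv op v (sinv op u A) \<in> r} \<in> q" for u A
  proof -
    have ph: "phi op u \<in> q" using q by (simp add: deltaS_iff)
    have "v \<in> sinv op u {s. sinv op s A \<in> r} \<longleftrightarrow> v \<in> {v. sinv op v (sinv op u A) \<in> r} \<inter> phi op u" for v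
      using sinv_sinv[OF ps, of v u A] unfolding sinv_def[of op u "{s. sinv op s A \<in> r}"] by auto
    then have "sinv op u {s. sinv op s A \<in> r} = {v. sinv op v (sinv op u A) \<in> r} \<inter> phi op u"
      by (rule set_eqI)
    then show ?thesis using uf_cut[OF Q ph] by simp
  qed
  show ?thesis
  proof (rule set_eqI)
    fix A
    show "A \<in> ustar op (ustar op p q) r \<longleftrightarrow> A \<in> ustar op p (ustar op q r)"
      unfolding ustar_mem by (simp only: key)
  qed
qed

definition bclosed :: "'a set set set \<Rightarrow> bool" where
  "bclosed C \<longleftrightarrow> C \<subseteq> betaS \<and> (\<forall>p\<in>betaS. \<Inter>C \<subseteq> p \<longrightarrow> p \<in> C)"

definition vcl :: "'a set set \<Rightarrow> 'a set set set" where
  "vcl F = {p \<in> betaS. F \<subseteq> p}"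

lemma vcl_closed: "bclosed (vcl F)"
proof -
  have "F \<subseteq> \<Inter>(vcl F)" unfolding vcl_def by blast
  then show ?thesis unfolding bclosed_def vcl_def by blast
qed

lemma bclosed_sub: "bclosed C \<Longrightarrow> C \<subseteq> betaS"
  unfolding bclosed_def by simp

lemma bclosedD: "bclosed C \<Longrightarrow> p \<in> betaS \<Longrightarrow> \<Inter>C \<subseteq> p \<Longrightarrow> p \<in> C"
  unfolding bclosed_def by blast

lemma Inter_closed:
  assumes "CC \<noteq> {}" "\<And>C. C \<in> CC \<Longrightarrow> bclosed C"
  shows "bclosed (\<Inter>CC)"
proof -
  have sub: "\<Inter>CC \<subseteq> betaS" using assms bclosed_sub by blast
  have "p \<in> \<Inter>CC" if p: "p \<in> betaS" "\<Inter>(\<Inter>CC) \<subseteq> p" for p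
  proof
    fix C assume C: "C \<in> CC"
    then have "\<Inter>CC \<subseteq> C" by blast
    then have "\<Inter>C \<subseteq> \<Inter>(\<Inter>CC)" by (rule Inter_anti_mono)
    then have "\<Inter>C \<subseteq> p" using p(2) by (rule order_trans)
    then show "p \<in> C" using bclosedD[OF assms(2)[OF C] p(1)] by simp
  qed
  then show ?thesis unfolding bclosed_def using sub by blast
qed

lemma Int_closed: "bclosed A \<Longrightarrow> bclosed B \<Longrightarrow> bclosed (A \<inter> B)"
proof -
  assume a: "bclosed A" "bclosed B"
  have "bclosed (\<Inter>{A, B})" by (rule Inter_closed) (use a in auto)
  then show ?thesis by simp
qed

lemma bclosure_closed: "bclosed (bclosure A)"
proof -
  have "bclosure A = vcl {A}" unfolding bclosure_def vcl_def by auto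
  then show ?thesis using vcl_closed by simp
qed

lemma deltaS_closed: "bclosed (deltaS op)"
proof -
  have "deltaS op = vcl (range (phi op))" unfolding vcl_def by (auto simp: deltaS_iff image_subset_iff)
  then show ?thesis using vcl_closed by simp
qed

lemma uf_Inter_finite:
  assumes U: "is_ultrafilter p" shows "finite H \<Longrightarrow> H \<subseteq> p \<Longrightarrow> \<Inter>H \<in> p"
proof (induction H rule: finite_induct)
  case empty
  then show ?case using uf_UNIV[OF U] by simp
next
  case (insert x F)
  then have "x \<in> p" "\<Inter>F \<in> p" by auto
  then show ?case using uf_Int[OF U] by simp
qed

lemma compactness:
  assumes ne: "CC \<noteq> {}" and cl: "\<And>C. C \<in> CC \<Longrightarrow> bclosed C"
    and nem: "\<And>C. C \<in> CC \<Longrightarrow> C \<noteq> {}"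
    and dir: "\<And>X Y. X \<in> CC \<Longrightarrow> Y \<in> CC \<Longrightarrow> \<exists>Z\<in>CC. Z \<subseteq> X \<inter> Y"
  shows "\<Inter>CC \<noteq> {}"
proof -
  define F where "F = (\<Union>C\<in>CC. \<Inter>C)"
  have fin: "finite H \<Longrightarrow> H \<subseteq> F \<Longrightarrow> \<exists>Z\<in>CC. H \<subseteq> \<Inter>Z" for H
  proof (induction H rule: finite_induct)
    case empty
    show ?case using ne by auto
  next
    case (insert g H)
    have "H \<subseteq> F" using insert.prems by simp
    from insert.IH[OF this] obtain Z where Z: "Z \<in> CC" "H \<subseteq> \<Inter>Z" by (rule bexE)
    have "g \<in> F" using insert.prems by simp
    then obtain C1 where C1: "C1 \<in> CC" "g \<in> \<Inter>C1" unfolding F_def by (rule UN_E)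
    obtain Z' where Z': "Z' \<in> CC" "Z' \<subseteq> C1 \<inter> Z" using dir[OF C1(1) Z(1)] by blast
    have "Z' \<subseteq> C1" "Z' \<subseteq> Z" using Z'(2) by simp_all
    then have i1: "\<Inter>C1 \<subseteq> \<Inter>Z'" "\<Inter>Z \<subseteq> \<Inter>Z'" by (simp_all add: Inter_anti_mono)
    have "g \<in> \<Inter>Z'" using C1(2) i1(1) by (rule subsetD[rotated])
    moreover have "H \<subseteq> \<Inter>Z'" using Z(2) i1(2) by (rule order_trans)
    ultimately have "insert g H \<subseteq> \<Inter>Z'" by simp
    then show ?case using Z'(1) by (intro bexI)
  qed
  have "fip F" unfolding fip_def
  proof (intro allI impI)
    fix H assume H: "finite H \<and> H \<subseteq> F"
    then obtain Z where Z: "Z \<in> CC" "H \<subseteq> \<Inter>Z" using fin by (elim conjE) metis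
    obtain p where p: "p \<in> Z" using nem[OF Z(1)] by blast
    have pb: "is_ultrafilter p" using bclosed_sub[OF cl[OF Z(1)]] p by (auto simp: betaS_iff)
    have "\<Inter>Z \<subseteq> p" using p by (rule Inter_lower)
    then have "H \<subseteq> p" using Z(2) by (rule order_trans[rotated])
    then have "\<Inter>H \<in> p" using uf_Inter_finite[OF pb] H by simp
    then show "\<Inter>H \<noteq> {}" using uf_empty[OF pb] by auto
  qed
  then obtain u where u: "is_ultrafilter u" "F \<subseteq> u" using ultrafilter_exists by blast
  have "u \<in> C" if C: "C \<in> CC" for C
  proof (rule bclosedD[OF cl[OF C]])
    show "u \<in> betaS" using u by (simp add: betaS_iff)
    have "\<Inter>C \<subseteq> F" using C unfolding F_def by (rule UN_upper)
    then show "\<Inter>C \<subseteq> u" using u(2) by (rule order_trans)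
  qed
  then have "u \<in> \<Inter>CC" by (rule InterI)
  then show ?thesis by auto
qed

lemma image_closed:
  assumes A: "bclosed A" and x: "x \<in> deltaS op"
  shows "bclosed ((\<lambda>r. ustar op r x) ` A)"
proof -
  let ?img = "(\<lambda>r. ustar op r x) ` A"
  have X: "is_ultrafilter x" using x by (rule deltaS_uf)
  have sub: "?img \<subseteq> betaS" using bclosed_sub[OF A] ustar_ultra[OF _ x] by blast
  have "p \<in> ?img" if p: "p \<in> betaS" "\<Inter>?img \<subseteq> p" for p
  proof -
    have P: "is_ultrafilter p" using p(1) by (simp add: betaS_iff)
    define B' where "B' B = {s. sinv op s B \<in> x}" for B
    define CC where "CC = (\<lambda>B. A \<inter> bclosure (B' B)) ` p"
    have memb: "r \<in> bclosure (B' B) \<longleftrightarrow> r \<in> betaS \<and> B \<in> ustar op r x" for r B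
      unfolding bclosure_def B'_def ustar_mem by simp
    have "\<Inter>CC \<noteq> {}"
    proof (rule compactness)
      show "CC \<noteq> {}" unfolding CC_def using uf_UNIV[OF P] by blast
    next
      fix C assume "C \<in> CC"
      then obtain B where "C = A \<inter> bclosure (B' B)" unfolding CC_def by blast
      then show "bclosed C" using Int_closed[OF A bclosure_closed] by simp
    next
      fix C assume "C \<in> CC"
      then obtain B where B: "B \<in> p" "C = A \<inter> bclosure (B' B)" unfolding CC_def by blast
      show "C \<noteq> {}"
      proof
        assume e: "C = {}"
        have "- B \<in> ustar op r x" if r: "r \<in> A" for r
        proof -
          have rb: "r \<in> betaS" using r bclosed_sub[OF A] by blast
          have U: "is_ultrafilter (ustar op r x)" using ustar_ultra[OF rb x] by (simp add: betaS_iff)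
          have "r \<notin> bclosure (B' B)" using e B(2) r by blast
          then have "B \<notin> ustar op r x" using memb rb by blast
          then show ?thesis using uf_compl[OF U] by simp
        qed
        then have "- B \<in> \<Inter>?img" by blast
        then have "- B \<in> p" using p(2) by blast
        then show False using B(1) uf_compl[OF P] by simp
      qed
    next
      fix X Y assume "X \<in> CC" "Y \<in> CC"
      then obtain B1 B2 where B: "B1 \<in> p" "X = A \<inter> bclosure (B' B1)" "B2 \<in> p" "Y = A \<inter> bclosure (B' B2)"
        unfolding CC_def by blast
      have "B1 \<inter> B2 \<in> p" using uf_Int[OF P B(1) B(3)] .
      moreover have "A \<inter> bclosure (B' (B1 \<inter> B2)) \<subseteq> X \<inter> Y"
      proof
        fix r assume r: "r \<in> A \<inter> bclosure (B' (B1 \<inter> B2))"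
        then have rb: "r \<in> betaS" "B1 \<inter> B2 \<in> ustar op r x" using memb by blast+
        have U: "is_ultrafilter (ustar op r x)" using ustar_ultra[OF rb(1) x] by (simp add: betaS_iff)
        have "B1 \<in> ustar op r x" "B2 \<in> ustar op r x" using rb(2) uf_Int_iff[OF U] by blast+
        then show "r \<in> X \<inter> Y" using B(2,4) r memb rb(1) by blast
      qed
      ultimately show "\<exists>Z\<in>CC. Z \<subseteq> X \<inter> Y" unfolding CC_def by blast
    qed
    then obtain r where r: "r \<in> \<Inter>CC" by blast
    have rA: "r \<in> A" using r uf_UNIV[OF P] unfolding CC_def by blast
    have rb: "r \<in> betaS" using rA bclosed_sub[OF A] by blast
    have "p \<subseteq> ustar op r x"
    proof
      fix B assume "B \<in> p"
      then have "r \<in> bclosure (B' B)" using r unfolding CC_def by blast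
      then show "B \<in> ustar op r x" using memb by blast
    qed
    then have "p = ustar op r x"
      using uf_eq[OF P] ustar_ultra[OF rb x] by (simp add: betaS_iff)
    then show ?thesis using rA by blast
  qed
  then show ?thesis unfolding bclosed_def using sub by blast
qed

definition sgp :: "'c set \<Rightarrow> ('c \<Rightarrow> 'c \<Rightarrow> 'c) \<Rightarrow> bool" where
  "sgp D m \<longleftrightarrow> (\<forall>x\<in>D. \<forall>y\<in>D. m x y \<in> D) \<and> (\<forall>x\<in>D. \<forall>y\<in>D. \<forall>z\<in>D. m (m x y) z = m x (m y z))"

definition lid :: "'c set \<Rightarrow> ('c \<Rightarrow> 'c \<Rightarrow> 'c) \<Rightarrow> 'c set \<Rightarrow> bool" where
  "lid D m L \<longleftrightarrow> L \<noteq> {} \<and> L \<subseteq> D \<and> (\<forall>x\<in>D. \<forall>y\<in>L. m x y \<in> L)"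

definition minl :: "'c set \<Rightarrow> ('c \<Rightarrow> 'c \<Rightarrow> 'c) \<Rightarrow> 'c set \<Rightarrow> bool" where
  "minl D m L \<longleftrightarrow> lid D m L \<and> (\<forall>J. lid D m J \<and> J \<subseteq> L \<longrightarrow> J = L)"

lemma sgp_closed: "sgp D m \<Longrightarrow> x \<in> D \<Longrightarrow> y \<in> D \<Longrightarrow> m x y \<in> D"
  unfolding sgp_def by blast
lemma sgp_assoc: "sgp D m \<Longrightarrow> x \<in> D \<Longrightarrow> y \<in> D \<Longrightarrow> z \<in> D \<Longrightarrow> m (m x y) z = m x (m y z)"
  unfolding sgp_def by blast

lemma lid_ne: "lid D m L \<Longrightarrow> L \<noteq> {}" unfolding lid_def by simp
lemma lid_sub: "lid D m L \<Longrightarrow> L \<subseteq> D" unfolding lid_def by simp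
lemma lid_mul: "lid D m L \<Longrightarrow> x \<in> D \<Longrightarrow> y \<in> L \<Longrightarrow> m x y \<in> L" unfolding lid_def by blast
lemma minl_lid: "minl D m L \<Longrightarrow> lid D m L" unfolding minl_def by simp
lemma minl_min: "minl D m L \<Longrightarrow> lid D m J \<Longrightarrow> J \<subseteq> L \<Longrightarrow> J = L" unfolding minl_def by blast

lemma ideal_ne: "sg_ideal D m I \<Longrightarrow> I \<noteq> {}" unfolding sg_ideal_def by simp
lemma ideal_sub: "sg_ideal D m I \<Longrightarrow> I \<subseteq> D" unfolding sg_ideal_def by simp
lemma ideal_mul1: "sg_ideal D m I \<Longrightarrow> x \<in> I \<Longrightarrow> y \<in> D \<Longrightarrow> m x y \<in> I" unfolding sg_ideal_def by blast
lemma ideal_mul2: "sg_ideal D m I \<Longrightarrow> x \<in> I \<Longrightarrow> y \<in> D \<Longrightarrow> m y x \<in> I" unfolding sg_ideal_def by blast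

lemma Kmin_lower: "sg_ideal D m I \<Longrightarrow> Kmin D m \<subseteq> I"
  unfolding Kmin_def by (rule Inter_lower) simp

lemma Kmin_greatest: "(\<And>I. sg_ideal D m I \<Longrightarrow> X \<subseteq> I) \<Longrightarrow> X \<subseteq> Kmin D m"
  unfolding Kmin_def by (rule Inter_greatest) simp

lemma lid_gen:
  assumes S: "sgp D m" and a: "a \<in> D"
  shows "lid D m ((\<lambda>x. m x a) ` D)"
  unfolding lid_def
proof (intro conjI ballI)
  show "(\<lambda>x. m x a) ` D \<noteq> {}" using a by blast
  show "(\<lambda>x. m x a) ` D \<subseteq> D" using sgp_closed[OF S _ a] by blast
next
  fix z y assume z: "z \<in> D" and y: "y \<in> (\<lambda>x. m x a) ` D"
  then obtain x where x: "x \<in> D" "y = m x a" by blast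
  have "m z y = m (m z x) a" using sgp_assoc[OF S z x(1) a] x(2) by simp
  moreover have "m z x \<in> D" using sgp_closed[OF S z x(1)] .
  ultimately show "m z y \<in> (\<lambda>x. m x a) ` D" by blast
qed

lemma minl_gen:
  assumes S: "sgp D m" and L: "minl D m L" and y: "y \<in> L"
  shows "(\<lambda>x. m x y) ` D = L"
proof (rule minl_min[OF L])
  have yD: "y \<in> D" using y lid_sub[OF minl_lid[OF L]] by blast
  show "lid D m ((\<lambda>x. m x y) ` D)" by (rule lid_gen[OF S yD])
  show "(\<lambda>x. m x y) ` D \<subseteq> L" using lid_mul[OF minl_lid[OF L] _ y] by blast
qed

lemma minl_sub_ideal:
  assumes S: "sgp D m" and L: "minl D m L" and I: "sg_ideal D m I"
  shows "L \<subseteq> I"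
proof -
  obtain y where y: "y \<in> L" using lid_ne[OF minl_lid[OF L]] by blast
  obtain i where i: "i \<in> I" using ideal_ne[OF I] by blast
  have iD: "i \<in> D" using i ideal_sub[OF I] by blast
  have yD: "y \<in> D" using y lid_sub[OF minl_lid[OF L]] by blast
  have iyL: "m i y \<in> L" using lid_mul[OF minl_lid[OF L] iD y] .
  have iyI: "m i y \<in> I" using ideal_mul1[OF I i yD] .
  have "(\<lambda>x. m x (m i y)) ` D = L" using minl_gen[OF S L iyL] .
  moreover have "(\<lambda>x. m x (m i y)) ` D \<subseteq> I" using ideal_mul2[OF I iyI] by blast
  ultimately show ?thesis by simp
qed

lemma minl_sub_Kmin:
  assumes S: "sgp D m" and L: "minl D m L"
  shows "L \<subseteq> Kmin D m"
  using minl_sub_ideal[OF S L] by (rule Kmin_greatest)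

lemma minl_right:
  assumes S: "sgp D m" and L: "minl D m L" and x: "x \<in> D"
  shows "minl D m ((\<lambda>y. m y x) ` L)"
proof -
  have LL: "lid D m L" using minl_lid[OF L] .
  have LD: "L \<subseteq> D" using lid_sub[OF LL] .
  have l1: "lid D m ((\<lambda>y. m y x) ` L)" unfolding lid_def
  proof (intro conjI ballI)
    show "(\<lambda>y. m y x) ` L \<noteq> {}" using lid_ne[OF LL] by blast
    show "(\<lambda>y. m y x) ` L \<subseteq> D" using sgp_closed[OF S _ x] LD by blast
  next
    fix z w assume z: "z \<in> D" and w: "w \<in> (\<lambda>y. m y x) ` L"
    then obtain y where y: "y \<in> L" "w = m y x" by blast
    have "m z w = m (m z y) x" using sgp_assoc[OF S z _ x, of y] y LD by auto
    moreover have "m z y \<in> L" using lid_mul[OF LL z y(1)] .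
    ultimately show "m z w \<in> (\<lambda>y. m y x) ` L" by blast
  qed
  have "J = (\<lambda>y. m y x) ` L" if J: "lid D m J" "J \<subseteq> (\<lambda>y. m y x) ` L" for J
  proof -
    let ?L' = "{y \<in> L. m y x \<in> J}"
    have "lid D m ?L'" unfolding lid_def
    proof (intro conjI ballI)
      obtain j where j: "j \<in> J" using lid_ne[OF J(1)] by blast
      then obtain y where "y \<in> L" "j = m y x" using J(2) by blast
      then show "?L' \<noteq> {}" using j by blast
      show "?L' \<subseteq> D" using LD by blast
    next
      fix z y assume z: "z \<in> D" and y: "y \<in> ?L'"
      have "m (m z y) x = m z (m y x)" using sgp_assoc[OF S z _ x, of y] y LD by auto
      moreover have "m z (m y x) \<in> J" using lid_mul[OF J(1) z] y by blast
      moreover have "m z y \<in> L" using lid_mul[OF LL z] y by blast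
      ultimately show "m z y \<in> ?L'" by simp
    qed
    then have "?L' = L" using minl_min[OF L] by blast
    then have "(\<lambda>y. m y x) ` L \<subseteq> J" by blast
    then show ?thesis using J(2) by blast
  qed
  then show ?thesis unfolding minl_def using l1 by blast
qed

lemma Kmin_ideal:
  assumes S: "sgp D m" and L: "minl D m L"
  shows "sg_ideal D m (Kmin D m)"
proof -
  have LD: "L \<subseteq> D" using lid_sub[OF minl_lid[OF L]] .
  have DI: "sg_ideal D m D" unfolding sg_ideal_def using lid_ne[OF minl_lid[OF L]] LD sgp_closed[OF S] by blast
  have ne: "Kmin D m \<noteq> {}" using minl_sub_Kmin[OF S L] lid_ne[OF minl_lid[OF L]] by blast
  have sub: "Kmin D m \<subseteq> D" using Kmin_lower[OF DI] .
  have cl: "m x y \<in> Kmin D m \<and> m y x \<in> Kmin D m" if "x \<in> Kmin D m" "y \<in> D" for x y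
  proof -
    have "m x y \<in> I \<and> m y x \<in> I" if I: "sg_ideal D m I" for I
    proof -
      have "x \<in> I" using \<open>x \<in> Kmin D m\<close> Kmin_lower[OF I] by blast
      then show ?thesis using ideal_mul1[OF I _ \<open>y \<in> D\<close>] ideal_mul2[OF I _ \<open>y \<in> D\<close>] by blast
    qed
    then show ?thesis unfolding Kmin_def by blast
  qed
  show ?thesis unfolding sg_ideal_def using ne sub cl by blast
qed

lemma Kmin_sub_union:
  assumes S: "sgp D m" and L: "minl D m L"
  shows "Kmin D m \<subseteq> \<Union>{L. minl D m L}"
proof (rule Kmin_lower)
  let ?U = "\<Union>{L. minl D m L}"
  show "sg_ideal D m ?U" unfolding sg_ideal_def
  proof (intro conjI ballI)
    show "?U \<noteq> {}" using L lid_ne[OF minl_lid[OF L]] by blast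
    show "?U \<subseteq> D" using lid_sub[OF minl_lid] by blast
  next
    fix x y assume x: "x \<in> ?U" and y: "y \<in> D"
    then obtain L' where L': "minl D m L'" "x \<in> L'" by blast
    have "m y x \<in> L'" using lid_mul[OF minl_lid[OF L'(1)] y L'(2)] .
    then show "m y x \<in> ?U" using L'(1) by blast
    have "m x y \<in> (\<lambda>z. m z y) ` L'" using L'(2) by blast
    then show "m x y \<in> ?U" using minl_right[OF S L'(1) y] by blast
  qed
qed

section \<open>Homomorphisms\<close>

definition shom :: "('c \<Rightarrow> 'd) \<Rightarrow> 'c set \<Rightarrow> ('c \<Rightarrow> 'c \<Rightarrow> 'c) \<Rightarrow> 'd set \<Rightarrow> ('d \<Rightarrow> 'd \<Rightarrow> 'd) \<Rightarrow> bool" where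
  "shom f D1 m1 D2 m2 \<longleftrightarrow> f ` D1 = D2 \<and> (\<forall>x\<in>D1. \<forall>y\<in>D1. f (m1 x y) = m2 (f x) (f y))"

lemma shom_mul: "shom f D1 m1 D2 m2 \<Longrightarrow> x \<in> D1 \<Longrightarrow> y \<in> D1 \<Longrightarrow> f (m1 x y) = m2 (f x) (f y)"
  unfolding shom_def by blast
lemma shom_onto: "shom f D1 m1 D2 m2 \<Longrightarrow> f ` D1 = D2"
  unfolding shom_def by blast

lemma shom_ideal_image:
  assumes H: "shom f D1 m1 D2 m2" and I: "sg_ideal D1 m1 I"
  shows "sg_ideal D2 m2 (f ` I)"
  unfolding sg_ideal_def
proof (intro conjI ballI)
  have ID: "I \<subseteq> D1" using ideal_sub[OF I] .
  show "f ` I \<noteq> {}" using ideal_ne[OF I] by blast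
  show "f ` I \<subseteq> D2" using ID shom_onto[OF H] by blast
  fix x y assume x: "x \<in> f ` I" and y: "y \<in> D2"
  obtain a where a: "a \<in> I" "x = f a" using x by blast
  obtain b where b: "b \<in> D1" "y = f b" using y shom_onto[OF H] by blast
  have aD: "a \<in> D1" using a ID by blast
  have "m2 x y = f (m1 a b)" using shom_mul[OF H aD b(1)] a b by simp
  moreover have "m1 a b \<in> I" using ideal_mul1[OF I a(1) b(1)] .
  ultimately show "m2 x y \<in> f ` I" by blast
  have "m2 y x = f (m1 b a)" using shom_mul[OF H b(1) aD] a b by simp
  moreover have "m1 b a \<in> I" using ideal_mul2[OF I a(1) b(1)] .
  ultimately show "m2 y x \<in> f ` I" by blast
qed

lemma shom_ideal_preimage:
  assumes H: "shom f D1 m1 D2 m2" and S1: "sgp D1 m1" and I: "sg_ideal D2 m2 I"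
  shows "sg_ideal D1 m1 {x \<in> D1. f x \<in> I}"
  unfolding sg_ideal_def
proof (intro conjI ballI)
  obtain i where i: "i \<in> I" using ideal_ne[OF I] by blast
  then have "i \<in> f ` D1" using ideal_sub[OF I] shom_onto[OF H] by blast
  then show "{x \<in> D1. f x \<in> I} \<noteq> {}" using i by blast
  show "{x \<in> D1. f x \<in> I} \<subseteq> D1" by blast
  fix x y assume x: "x \<in> {x \<in> D1. f x \<in> I}" and y: "y \<in> D1"
  have fy: "f y \<in> D2" using y shom_onto[OF H] by blast
  show "m1 x y \<in> {x \<in> D1. f x \<in> I}"
    using shom_mul[OF H _ y, of x] x sgp_closed[OF S1 _ y, of x] ideal_mul1[OF I _ fy, of "f x"] by auto
  show "m1 y x \<in> {x \<in> D1. f x \<in> I}"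
    using shom_mul[OF H y, of x] x sgp_closed[OF S1 y, of x] ideal_mul2[OF I _ fy, of "f x"] by auto
qed

lemma shom_minl:
  assumes H: "shom f D1 m1 D2 m2" and S1: "sgp D1 m1" and L: "minl D1 m1 L"
  shows "minl D2 m2 (f ` L)"
proof -
  have LL: "lid D1 m1 L" using minl_lid[OF L] .
  have LD: "L \<subseteq> D1" using lid_sub[OF LL] .
  have l1: "lid D2 m2 (f ` L)" unfolding lid_def
  proof (intro conjI ballI)
    show "f ` L \<noteq> {}" using lid_ne[OF LL] by blast
    show "f ` L \<subseteq> D2" using LD shom_onto[OF H] by blast
  next
    fix z w assume z: "z \<in> D2" and w: "w \<in> f ` L"
    obtain a where a: "a \<in> L" "w = f a" using w by blast
    obtain b where b: "b \<in> D1" "z = f b" using z shom_onto[OF H] by blast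
    have "m2 z w = f (m1 b a)" using shom_mul[OF H b(1), of a] a b LD by auto
    moreover have "m1 b a \<in> L" using lid_mul[OF LL b(1) a(1)] .
    ultimately show "m2 z w \<in> f ` L" by blast
  qed
  have "J = f ` L" if J: "lid D2 m2 J" "J \<subseteq> f ` L" for J
  proof -
    let ?L' = "{y \<in> L. f y \<in> J}"
    have "lid D1 m1 ?L'" unfolding lid_def
    proof (intro conjI ballI)
      obtain j where j: "j \<in> J" using lid_ne[OF J(1)] by blast
      then obtain y where "y \<in> L" "j = f y" using J(2) by blast
      then show "?L' \<noteq> {}" using j by blast
      show "?L' \<subseteq> D1" using LD by blast
    next
      fix z y assume z: "z \<in> D1" and y: "y \<in> ?L'"
      have fz: "f z \<in> D2" using z shom_onto[OF H] by blast
      have "f (m1 z y) = m2 (f z) (f y)" using shom_mul[OF H z, of y] y LD by auto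
      moreover have "m2 (f z) (f y) \<in> J" using lid_mul[OF J(1) fz] y by blast
      moreover have "m1 z y \<in> L" using lid_mul[OF LL z] y by blast
      ultimately show "m1 z y \<in> ?L'" by simp
    qed
    then have "?L' = L" using minl_min[OF L] by blast
    then have "f ` L \<subseteq> J" by blast
    then show ?thesis using J(2) by blast
  qed
  then show ?thesis unfolding minl_def using l1 by blast
qed

lemma deltaS_sub: "deltaS op \<subseteq> betaS"
  by (auto simp: deltaS_iff)

lemma deltaS_ne:
  assumes ad: "adequate op" shows "deltaS op \<noteq> {}"
proof -
  have "fip (range (phi op))" unfolding fip_def
  proof (intro allI impI)
    fix H assume H: "finite H \<and> H \<subseteq> range (phi op)"
    then obtain X where X: "finite X" "H = phi op ` X" using finite_subset_image[of H "phi op" UNIV] by blast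
    show "\<Inter>H \<noteq> {}"
    proof (cases "X = {}")
      case True then show ?thesis using X by simp
    next
      case False
      have "sigma op X \<noteq> {}" using ad X(1) False unfolding adequate_def by blast
      then show ?thesis using X(2) unfolding sigma_def by simp
    qed
  qed
  then obtain u where u: "is_ultrafilter u" "range (phi op) \<subseteq> u" using ultrafilter_exists by blast
  then have "u \<in> deltaS op" by (auto simp: deltaS_iff betaS_iff)
  then show ?thesis by auto
qed

lemma sgp_delta: "partial_semigroup op \<Longrightarrow> sgp (deltaS op) (ustar op)"
  unfolding sgp_def using ustar_delta ustar_assoc by blast

lemma chain_directed:
  assumes "\<forall>X\<in>C. \<forall>Y\<in>C. X \<subseteq> Y \<or> Y \<subseteq> X" "X \<in> C" "Y \<in> C"
  shows "\<exists>Z\<in>C. Z \<subseteq> X \<inter> Y"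
proof -
  have "X \<subseteq> Y \<or> Y \<subseteq> X" using assms by blast
  then show ?thesis
  proof
    assume "X \<subseteq> Y" then show ?thesis using assms(2) by (intro bexI[of _ X]) auto
  next
    assume "Y \<subseteq> X" then show ?thesis using assms(3) by (intro bexI[of _ Y]) auto
  qed
qed

lemma minl_exists:
  assumes ps: "partial_semigroup op" and ad: "adequate op"
  shows "\<exists>L. minl (deltaS op) (ustar op) L"
proof -
  let ?D = "deltaS op" and ?m = "ustar op"
  have S: "sgp ?D ?m" using sgp_delta[OF ps] .
  let ?AA = "{L. lid ?D ?m L \<and> bclosed L}"
  have Dl: "lid ?D ?m ?D" unfolding lid_def using deltaS_ne[OF ad] sgp_closed[OF S] by blast
  have "\<exists>M\<in>?AA. \<forall>X\<in>?AA. X \<subseteq> M \<longrightarrow> X = M"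
  proof (rule min_Zorn)
    show "?AA \<noteq> {}" using Dl deltaS_closed by blast
  next
    fix C assume C: "C \<noteq> {}" "C \<subseteq> ?AA" "\<forall>X\<in>C. \<forall>Y\<in>C. X \<subseteq> Y \<or> Y \<subseteq> X"
    have cl: "bclosed (\<Inter>C)" using C(1,2) by (intro Inter_closed) auto
    have ne: "\<Inter>C \<noteq> {}"
    proof (rule compactness)
      show "C \<noteq> {}" by (rule C(1))
      show "bclosed X" if "X \<in> C" for X using that C(2) by blast
      show "X \<noteq> {}" if "X \<in> C" for X using that C(2) lid_ne by blast
      show "\<exists>Z\<in>C. Z \<subseteq> X \<inter> Y" if "X \<in> C" "Y \<in> C" for X Y
        using chain_directed[OF C(3) that] .
    qed
    have "lid ?D ?m (\<Inter>C)" unfolding lid_def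
    proof (intro conjI ballI)
      show "\<Inter>C \<noteq> {}" by (rule ne)
      show "\<Inter>C \<subseteq> ?D" using C(1,2) lid_sub by blast
    next
      fix x y assume x: "x \<in> ?D" and y: "y \<in> \<Inter>C"
      show "?m x y \<in> \<Inter>C"
      proof
        fix X assume X: "X \<in> C"
        then have "y \<in> X" using y by blast
        then show "?m x y \<in> X" using lid_mul[of ?D ?m X] X C(2) x by blast
      qed
    qed
    then show "\<Inter>C \<in> ?AA" using cl by blast
  qed
  then obtain M where M: "lid ?D ?m M" "bclosed M" and mn: "\<And>X. X \<in> ?AA \<Longrightarrow> X \<subseteq> M \<Longrightarrow> X = M"
    by blast
  have "J = M" if J: "lid ?D ?m J" "J \<subseteq> M" for J
  proof -
    obtain y where y: "y \<in> J" using lid_ne[OF J(1)] by blast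
    have yD: "y \<in> ?D" using y lid_sub[OF J(1)] by blast
    let ?G = "(\<lambda>x. ?m x y) ` ?D"
    have G1: "lid ?D ?m ?G" by (rule lid_gen[OF S yD])
    have G2: "bclosed ?G" by (rule image_closed[OF deltaS_closed yD])
    have G3: "?G \<subseteq> J" using lid_mul[OF J(1) _ y] by blast
    have "?G = M" using mn[of ?G] G1 G2 G3 J(2) by blast
    then show ?thesis using G3 J(2) by blast
  qed
  then have "minl ?D ?m M" unfolding minl_def using M(1) by blast
  then show ?thesis by blast
qed

lemma ellis:
  assumes ps: "partial_semigroup op" and Mne: "M \<noteq> {}" and MD: "M \<subseteq> deltaS op"
    and Mc: "bclosed M" and Ms: "\<And>a b. a \<in> M \<Longrightarrow> b \<in> M \<Longrightarrow> ustar op a b \<in> M"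
  shows "\<exists>e\<in>M. ustar op e e = e"
proof -
  let ?D = "deltaS op" and ?m = "ustar op"
  have S: "sgp ?D ?m" using sgp_delta[OF ps] .
  let ?AA = "{N. N \<noteq> {} \<and> N \<subseteq> M \<and> bclosed N \<and> (\<forall>a\<in>N. \<forall>b\<in>N. ?m a b \<in> N)}"
  have "\<exists>N\<in>?AA. \<forall>X\<in>?AA. X \<subseteq> N \<longrightarrow> X = N"
  proof (rule min_Zorn)
    show "?AA \<noteq> {}" using Mne Mc Ms by blast
  next
    fix C assume C: "C \<noteq> {}" "C \<subseteq> ?AA" "\<forall>X\<in>C. \<forall>Y\<in>C. X \<subseteq> Y \<or> Y \<subseteq> X"
    have cl: "bclosed (\<Inter>C)" using C(1,2) by (intro Inter_closed) auto
    have ne: "\<Inter>C \<noteq> {}"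
    proof (rule compactness)
      show "C \<noteq> {}" by (rule C(1))
      show "bclosed X" if "X \<in> C" for X using that C(2) by blast
      show "X \<noteq> {}" if "X \<in> C" for X using that C(2) by blast
      show "\<exists>Z\<in>C. Z \<subseteq> X \<inter> Y" if "X \<in> C" "Y \<in> C" for X Y
        using chain_directed[OF C(3) that] .
    qed
    have sub: "\<Inter>C \<subseteq> M" using C(1,2) by blast
    have mul: "\<forall>a\<in>\<Inter>C. \<forall>b\<in>\<Inter>C. ?m a b \<in> \<Inter>C"
    proof (intro ballI InterI)
      fix a b X assume "a \<in> \<Inter>C" "b \<in> \<Inter>C" "X \<in> C"
      then have "a \<in> X" "b \<in> X" "X \<in> ?AA" using C(2) by blast+
      then show "?m a b \<in> X" by blast
    qed
    show "\<Inter>C \<in> ?AA" using cl ne sub mul by blast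
  qed
  then obtain N where N0: "N \<in> ?AA" and mn0: "\<forall>X\<in>?AA. X \<subseteq> N \<longrightarrow> X = N"
    by (rule bexE)
  have N: "N \<noteq> {}" "N \<subseteq> M" "bclosed N" "\<And>a b. a \<in> N \<Longrightarrow> b \<in> N \<Longrightarrow> ?m a b \<in> N"
    using N0 by auto
  have mn: "X = N" if "X \<in> ?AA" "X \<subseteq> N" for X using mn0 that by simp
  obtain x where x: "x \<in> N" using N(1) by blast
  have ND: "N \<subseteq> ?D" using N(2) MD by blast
  have xD: "x \<in> ?D" using x ND by blast
  let ?Nx = "(\<lambda>r. ?m r x) ` N"
  have Nx1: "?Nx \<subseteq> N" using N(4) x by blast
  have Nx2: "bclosed ?Nx" by (rule image_closed[OF N(3) xD])
  have Nx3: "\<forall>a\<in>?Nx. \<forall>b\<in>?Nx. ?m a b \<in> ?Nx"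
  proof (intro ballI)
    fix a b assume a: "a \<in> ?Nx" and b: "b \<in> ?Nx"
    then obtain a' b' where ab: "a' \<in> N" "b' \<in> N" "a = ?m a' x" "b = ?m b' x" by blast
    have aD: "a \<in> ?D" "b' \<in> ?D" using a Nx1 ND ab(2) by blast+
    have "?m a b = ?m (?m a b') x" using sgp_assoc[OF S aD(1) aD(2) xD] ab(4) by simp
    moreover have "?m a b' \<in> N" using N(4) a Nx1 ab(2) by blast
    ultimately show "?m a b \<in> ?Nx" by blast
  qed
  have "?Nx \<noteq> {}" using x by blast
  then have "?Nx \<in> ?AA" using Nx1 Nx2 Nx3 N(2) by simp
  then have "?Nx = N" using mn Nx1 by simp
  then have "x \<in> ?Nx" using x by simp
  then obtain y0 where y0: "y0 \<in> N" "?m y0 x = x" by blast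
  let ?P = "{y \<in> N. ?m y x = x}"
  have X: "is_ultrafilter x" using xD by (rule deltaS_uf)
  have Peq: "?P = N \<inter> vcl ((\<lambda>B. {s. sinv op s B \<in> x}) ` x)"
  proof (rule set_eqI)
    fix y
    show "y \<in> ?P \<longleftrightarrow> y \<in> N \<inter> vcl ((\<lambda>B. {s. sinv op s B \<in> x}) ` x)"
    proof (cases "y \<in> N")
      case True
      then have yb: "y \<in> betaS" using ND deltaS_sub by blast
      have U: "is_ultrafilter (?m y x)" using ustar_ultra[OF yb xD] by (simp add: betaS_iff)
      have "?m y x = x \<longleftrightarrow> x \<subseteq> ?m y x" using uf_eq[OF X U] by blast
      also have "\<dots> \<longleftrightarrow> (\<lambda>B. {s. sinv op s B \<in> x}) ` x \<subseteq> y"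
        unfolding image_subset_iff by (simp add: ustar_mem subset_iff Ball_def)
      finally show ?thesis using True yb unfolding vcl_def by blast
    next
      case False then show ?thesis by blast
    qed
  qed
  have P1: "bclosed ?P" unfolding Peq by (rule Int_closed[OF N(3) vcl_closed])
  have P2: "\<forall>a\<in>?P. \<forall>b\<in>?P. ?m a b \<in> ?P"
  proof (intro ballI)
    fix a b assume a: "a \<in> ?P" and b: "b \<in> ?P"
    have aD: "a \<in> ?D" "b \<in> ?D" using a b ND by blast+
    have "?m (?m a b) x = ?m a (?m b x)" using sgp_assoc[OF S aD xD] .
    also have "\<dots> = x" using a b by simp
    finally show "?m a b \<in> ?P" using N(4) a b by blast
  qed
  have "?P \<noteq> {}" using y0 by blast
  then have "?P \<in> ?AA" using P1 P2 N(2) by auto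
  then have "?P = N" using mn by simp
  then have "?m x x = x" using x by blast
  then show ?thesis using x N(2) by blast
qed

lemma ext_uf:
  assumes P: "is_ultrafilter p" shows "is_ultrafilter (ext h p)"
  unfolding is_ultrafilter_def ext_def
proof (intro conjI allI impI)
  show "UNIV \<in> {B. h -` B \<in> p}" using uf_UNIV[OF P] by simp
  show "{} \<notin> {B. h -` B \<in> p}" using uf_empty[OF P] by simp
next
  fix A B assume "A \<in> {B. h -` B \<in> p} \<and> A \<subseteq> B"
  then show "B \<in> {B. h -` B \<in> p}" using uf_mono[OF P, of "h -` A" "h -` B"] by auto
next
  fix A B assume "A \<in> {B. h -` B \<in> p} \<and> B \<in> {B. h -` B \<in> p}"
  then show "A \<inter> B \<in> {B. h -` B \<in> p}" using uf_Int[OF P, of "h -` A" "h -` B"] by auto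
next
  fix A show "A \<in> {B. h -` B \<in> p} \<or> - A \<in> {B. h -` B \<in> p}"
    using uf_compl[OF P, of "h -` A"] by (auto simp: vimage_Compl)
qed

lemma ext_mem: "B \<in> ext h p \<longleftrightarrow> h -` B \<in> p"
  unfolding ext_def by simp

lemma ext_hom:
  assumes hom: "ps_hom opS opT h" and p: "p \<in> deltaS opS" and q: "q \<in> deltaS opS"
  shows "ext h (ustar opS p q) = ustar opT (ext h p) (ext h q)"
proof (rule set_eqI)
  fix B
  have Q: "is_ultrafilter q" using q by (rule deltaS_uf)
  have eq: "sinv opS s (h -` B) = h -` (sinv opT (h s) B) \<inter> phi opS s" for s
  proof (rule set_eqI)
    fix t
    show "t \<in> sinv opS s (h -` B) \<longleftrightarrow> t \<in> h -` (sinv opT (h s) B) \<inter> phi opS s"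
    proof (cases "opS s t")
      case None then show ?thesis unfolding sinv_def phi_def by simp
    next
      case (Some z)
      then have "t \<in> phi opS s" unfolding phi_def by simp
      then have "h t \<in> phi opT (h s) \<and> opT (h s) (h t) = map_option h (opS s t)"
        using hom unfolding ps_hom_def by blast
      then show ?thesis using Some unfolding sinv_def phi_def by simp
    qed
  qed
  have "sinv opS s (h -` B) \<in> q \<longleftrightarrow> h -` (sinv opT (h s) B) \<in> q" for s
    unfolding eq using uf_cut[OF Q, of "phi opS s" "h -` (sinv opT (h s) B)"] q
    by (simp add: deltaS_iff)
  then show "B \<in> ext h (ustar opS p q) \<longleftrightarrow> B \<in> ustar opT (ext h p) (ext h q)"
    unfolding ext_mem ustar_mem by (simp add: vimage_def)
qed

lemma fiber_closed:
  assumes Q: "is_ultrafilter q"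
  shows "bclosed {p \<in> betaS. ext h p = q}"
proof -
  have "{p \<in> betaS. ext h p = q} = vcl ((\<lambda>B. h -` B) ` q)"
  proof (rule set_eqI)
    fix p
    show "p \<in> {p \<in> betaS. ext h p = q} \<longleftrightarrow> p \<in> vcl ((\<lambda>B. h -` B) ` q)"
    proof (cases "p \<in> betaS")
      case True
      then have U: "is_ultrafilter (ext h p)" using ext_uf by (simp add: betaS_iff)
      have "ext h p = q \<longleftrightarrow> q \<subseteq> ext h p" using uf_eq[OF Q U] by blast
      also have "\<dots> \<longleftrightarrow> (\<lambda>B. h -` B) ` q \<subseteq> p" by (auto simp: ext_mem)
      finally show ?thesis using True unfolding vcl_def by blast
    next
      case False then show ?thesis unfolding vcl_def by blast
    qed
  qed
  then show ?thesis using vcl_closed by simp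
qed

theorem theorem5p6:
  fixes opS :: "'a \<Rightarrow> 'a \<Rightarrow> 'a option" and opT :: "'b \<Rightarrow> 'b \<Rightarrow> 'b option"
    and h :: "'a \<Rightarrow> 'b"
  assumes "partial_semigroup opS" "pcommutative opS" "adequate opS"
    and "partial_semigroup opT" "pcommutative opT" "adequate opT"
    and "surj h" "ps_hom opS opT h"
    and "ext h ` deltaS opS = deltaS opT"
  shows "ext h ` KdeltaS opS = KdeltaS opT
         \<and> (\<forall>A. central opS A \<longrightarrow> central opT (h ` A))
         \<and> (\<forall>A. central opT A \<longrightarrow> central opS (h -` A))"
proof -
  note psS = assms(1) and adS = assms(3) and psT = assms(4) and hom = assms(8) and onto = assms(9)
  let ?D1 = "deltaS opS" and ?m1 = "ustar opS" and ?D2 = "deltaS opT" and ?m2 = "ustar opT"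
  let ?f = "ext h"
  have S1: "sgp ?D1 ?m1" using sgp_delta[OF psS] .
  have S2: "sgp ?D2 ?m2" using sgp_delta[OF psT] .
  have H: "shom ?f ?D1 ?m1 ?D2 ?m2" unfolding shom_def
  proof (intro conjI ballI)
    show "?f ` ?D1 = ?D2" by (rule onto)
    fix x y assume "x \<in> ?D1" "y \<in> ?D1"
    then show "?f (?m1 x y) = ?m2 (?f x) (?f y)" by (rule ext_hom[OF hom])
  qed
  have fD1: "?f x \<in> ?D2" if "x \<in> ?D1" for x
  proof -
    have "?f x \<in> ?f ` ?D1" using that by (rule imageI)
    then show ?thesis unfolding onto .
  qed
  obtain L1 where L1: "minl ?D1 ?m1 L1" using minl_exists[OF psS adS] by blast
  have L1T: "minl ?D2 ?m2 (?f ` L1)" using shom_minl[OF H S1 L1] .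
  have K1: "sg_ideal ?D1 ?m1 (Kmin ?D1 ?m1)" using Kmin_ideal[OF S1 L1] .
  have K2: "sg_ideal ?D2 ?m2 (Kmin ?D2 ?m2)" using Kmin_ideal[OF S2 L1T] .
  have a1: "?f ` Kmin ?D1 ?m1 \<subseteq> Kmin ?D2 ?m2"
  proof (rule Kmin_greatest)
    fix I assume I: "sg_ideal ?D2 ?m2 I"
    have "Kmin ?D1 ?m1 \<subseteq> {x \<in> ?D1. ?f x \<in> I}"
      using Kmin_lower[OF shom_ideal_preimage[OF H S1 I]] .
    then show "?f ` Kmin ?D1 ?m1 \<subseteq> I" by blast
  qed
  have a2: "Kmin ?D2 ?m2 \<subseteq> ?f ` Kmin ?D1 ?m1"
    using Kmin_lower[OF shom_ideal_image[OF H K1]] .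
  have a: "?f ` KdeltaS opS = KdeltaS opT"
    unfolding KdeltaS_def using a1 a2 by (rule subset_antisym)
  have b: "central opT (h ` A)" if c: "central opS A" for A
  proof -
    obtain p where p: "p \<in> KdeltaS opS" "p \<in> bclosure A" "?m1 p p = p"
      using c unfolding central_def by blast
    have pD: "p \<in> ?D1" using p(1) ideal_sub[OF K1] unfolding KdeltaS_def by blast
    have fK: "?f p \<in> KdeltaS opT" using p(1) a by blast
    have fD: "?f p \<in> ?D2" using fD1[OF pD] .
    have "A \<in> p" using p(2) unfolding bclosure_def by blast
    moreover have "A \<subseteq> h -` (h ` A)" by blast
    moreover have P: "is_ultrafilter p" using pD by (rule deltaS_uf)
    ultimately have "h -` (h ` A) \<in> p" using uf_mono by blast
    then have "h ` A \<in> ?f p" by (simp add: ext_mem)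
    then have fB: "?f p \<in> bclosure (h ` A)" using fD deltaS_sub unfolding bclosure_def by blast
    have "?m2 (?f p) (?f p) = ?f p" using shom_mul[OF H pD pD] p(3) by simp
    then show ?thesis unfolding central_def using fK fB by blast
  qed
  have c: "central opS (h -` A)" if c: "central opT A" for A
  proof -
    obtain q where q: "q \<in> KdeltaS opT" "q \<in> bclosure A" "?m2 q q = q"
      using c unfolding central_def by blast
    have qK: "q \<in> Kmin ?D2 ?m2" using q(1) unfolding KdeltaS_def .
    have qD: "q \<in> ?D2" using qK ideal_sub[OF K2] by blast
    have Q: "is_ultrafilter q" using qD by (rule deltaS_uf)
    obtain LT where LT: "minl ?D2 ?m2 LT" "q \<in> LT" using Kmin_sub_union[OF S2 L1T] qK by blast
    have "q \<in> ?f ` ?D1" using qD unfolding onto .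
    then obtain x where x: "x \<in> ?D1" "?f x = q" by (metis imageE)
    let ?L2 = "(\<lambda>y. ?m1 y x) ` L1"
    have L2: "minl ?D1 ?m1 ?L2" using minl_right[OF S1 L1 x(1)] .
    have L2T: "minl ?D2 ?m2 (?f ` ?L2)" using shom_minl[OF H S1 L2] .
    have L1D: "L1 \<subseteq> ?D1" using lid_sub[OF minl_lid[OF L1]] .
    have L2D: "?L2 \<subseteq> ?D1" using lid_sub[OF minl_lid[OF L2]] .
    have "?f ` ?L2 \<subseteq> LT"
    proof
      fix z assume "z \<in> ?f ` ?L2"
      then obtain y where y: "y \<in> L1" "z = ?f (?m1 y x)" by blast
      have yD: "y \<in> ?D1" using y(1) L1D by blast
      have "z = ?m2 (?f y) q" using y(2) shom_mul[OF H yD x(1)] x(2) by simp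
      moreover have "?f y \<in> ?D2" using fD1[OF yD] .
      ultimately show "z \<in> LT" using lid_mul[OF minl_lid[OF LT(1)] _ LT(2)] by blast
    qed
    then have "?f ` ?L2 = LT" using minl_min[OF LT(1) minl_lid[OF L2T]] by blast
    then obtain e0 where e0: "e0 \<in> ?L2" "?f e0 = q" using LT(2) by (metis imageE)
    have e0D: "e0 \<in> ?D1" using e0(1) L2D by blast
    let ?M = "?L2 \<inter> {p \<in> betaS. ?f p = q}"
    have Mne: "?M \<noteq> {}" using e0 e0D deltaS_sub by blast
    have MD: "?M \<subseteq> ?D1" using L2D by blast
    have "(\<lambda>r. ?m1 r e0) ` ?D1 = ?L2" using minl_gen[OF S1 L2 e0(1)] .
    then have L2c: "bclosed ?L2" using image_closed[OF deltaS_closed e0D] by metis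
    have Mc: "bclosed ?M" using Int_closed[OF L2c fiber_closed[OF Q]] .
    have Ms: "?m1 a b \<in> ?M" if ab: "a \<in> ?M" "b \<in> ?M" for a b
    proof -
      have aD: "a \<in> ?D1" "b \<in> ?D1" using ab MD by blast+
      have "?m1 a b \<in> ?L2" using lid_mul[OF minl_lid[OF L2] aD(1)] ab(2) by blast
      moreover have "?f (?m1 a b) = q" using shom_mul[OF H aD] ab q(3) by simp
      moreover have "?m1 a b \<in> betaS" using sgp_closed[OF S1 aD] deltaS_sub by blast
      ultimately show ?thesis by blast
    qed
    obtain e where e: "e \<in> ?M" "?m1 e e = e" using ellis[OF psS Mne MD Mc Ms] by blast
    have eK: "e \<in> KdeltaS opS" using e(1) minl_sub_Kmin[OF S1 L2] unfolding KdeltaS_def by blast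
    have "A \<in> q" using q(2) unfolding bclosure_def by blast
    then have "h -` A \<in> e" using e(1) by (auto simp: ext_mem)
    then have "e \<in> bclosure (h -` A)" using e(1) unfolding bclosure_def by blast
    then show ?thesis unfolding central_def using eK e(2) by blast
  qed
  show ?thesis using a b c by blast
qed

end
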